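(* Let $X_1,X_2,\ldots$ be i.i.d. random variables with $\mathbb EX_k=0$, $\operatorname{Var}X_k=1$, such that for some $\alpha\in[1,2)$ and $D>0$, $$\lim_{x\to+\infty}\frac1{x^\alpha}\log\mathbb P[X_1>x]=-D.$$ Then $\lim_{n\to\infty}\mathbb P[\mathbf M_n=\mathbf U_n]=1$, where $\mathbf U_n=\max\{X_1,\ldots,X_n\}$.
   Context: $S_0=0$, $S_k=X_1+\cdots+X_k$, $\mathbf M_n=\max_{0\leq i<j\leq n}\frac{S_j-S_i}{\sqrt{j-i}}$. *)

theory Defs
  imports "HOL-Probability.Probability"
begin

definition psum :: "(nat \<Rightarrow> 'a \<Rightarrow> real) \<Rightarrow> nat \<Rightarrow> 'a \<Rightarrow> real" where
  "psum X k \<omega> = (\<Sum>i\<in>{1..k}. X i \<omega>)"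

definition Mmax :: "(nat \<Rightarrow> 'a \<Rightarrow> real) \<Rightarrow> nat \<Rightarrow> 'a \<Rightarrow> real" where
  "Mmax X n \<omega> = Max {(psum X j \<omega> - psum X i \<omega>) / sqrt (real (j - i)) | i j. i < j \<and> j \<le> n}"

definition Umax :: "(nat \<Rightarrow> 'a \<Rightarrow> real) \<Rightarrow> nat \<Rightarrow> 'a \<Rightarrow> real" where
  "Umax X n \<omega> = Max {X k \<omega> | k. 1 \<le> k \<and> k \<le> n}"

end

theory Submission
  imports Defs "HOL-Real_Asymp.Real_Asymp"
begin


lemma exp_quad_bound:
  fixes y :: real
  shows "exp y \<le> 1 + y + y\<^sup>2 / 2 * exp (max y 0)"
proof (cases "y \<le> 0")
  case True
  obtain t where t: "\<bar>t\<bar> \<le> \<bar>y\<bar>" "exp y = (\<Sum>m<3. (y ^ m) / fact m) + (exp t / fact 3) * y ^ 3"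
    using Maclaurin_exp_le[of y 3] by blast
  have s: "(\<Sum>m<3. (y ^ m) / fact m) = 1 + y + y\<^sup>2/2"
    by (simp add: eval_nat_numeral)
  have "y ^ 3 \<le> 0" using True by (simp add: power_le_zero_eq)
  hence "exp t * y ^ 3 \<le> 0" by (intro mult_nonneg_nonpos) auto
  hence "(exp t / fact 3) * y ^ 3 \<le> 0" by (simp add: divide_nonpos_pos)
  thus ?thesis using t s True by simp
next
  case False
  obtain t where t: "\<bar>t\<bar> \<le> \<bar>y\<bar>" "exp y = (\<Sum>m<2. (y ^ m) / fact m) + (exp t / fact 2) * y ^ 2"
    using Maclaurin_exp_le[of y 2] by blast
  have s: "(\<Sum>m<2. (y ^ m) / fact m) = 1 + y"
    by (simp add: eval_nat_numeral)
  have "exp t \<le> exp y" using t(1) False by simp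
  hence "(exp t / fact 2) * y ^ 2 \<le> y\<^sup>2 / 2 * exp (max y 0)" using False
    by (simp add: eval_nat_numeral mult.commute)
  thus ?thesis using t s by simp
qed

lemma convex_powr_nonneg:
  assumes "(1::real) \<le> p"
  shows "convex_on {0..} (\<lambda>x::real. x powr p)"
proof (rule convex_onI)
  fix t x y :: real
  assume t: "0 < t" "t < 1" and xy: "x \<in> {0..}" "y \<in> {0..}"
  have tp: "t powr p \<le> t" using t assms by (intro powr_le_one_le) auto
  have tp2: "(1-t) powr p \<le> 1-t" using t assms by (intro powr_le_one_le) auto
  show "((1 - t) *\<^sub>R x + t *\<^sub>R y) powr p \<le> (1 - t) * x powr p + t * y powr p"
  proof (cases "x = 0 \<or> y = 0")
    case True
    then show ?thesis
    proof
      assume "x = 0"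
      thus ?thesis using tp xy t by (simp add: powr_mult mult_right_mono)
    next
      assume "y = 0"
      thus ?thesis using tp2 xy t by (simp add: powr_mult mult_right_mono)
    qed
  next
    case False
    hence "x \<in> {0<..}" "y \<in> {0<..}" using xy by auto
    thus ?thesis using convex_onD[OF powr_convex[OF assms], of t x y] t by simp
  qed
qed (simp add: convex_real_interval)





lemma power_mean_sum:
  fixes y :: "nat \<Rightarrow> real"
  assumes "finite W" "W \<noteq> {}" "1 \<le> p" "\<And>i. i \<in> W \<Longrightarrow> 0 \<le> y i"
  shows "real (card W) powr (1 - p) * (\<Sum>i\<in>W. y i) powr p \<le> (\<Sum>i\<in>W. y i powr p)"
proof -
  define k where "k = real (card W)"
  have k: "k > 0" using assms(1,2) by (simp add: k_def card_gt_0_iff)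
  have "(\<lambda>x. x powr p) (\<Sum>i\<in>W. (1/k) *\<^sub>R y i) \<le> (\<Sum>i\<in>W. (1/k) * (\<lambda>x. x powr p) (y i))"
    apply (rule convex_on_sum[OF assms(1,2) convex_powr_nonneg[OF assms(3)]])
    using assms(4) k by (auto simp: k_def)
  hence "((\<Sum>i\<in>W. y i) / k) powr p \<le> (\<Sum>i\<in>W. y i powr p) / k"
    by (simp add: sum_distrib_left[symmetric] sum_divide_distrib[symmetric])
  hence "(\<Sum>i\<in>W. y i) powr p / k powr p \<le> (\<Sum>i\<in>W. y i powr p) / k"
    using assms(4) k by (simp add: powr_divide sum_nonneg)
  hence "k * ((\<Sum>i\<in>W. y i) powr p / k powr p) \<le> (\<Sum>i\<in>W. y i powr p)"
    using k by (simp add: field_simps)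
  moreover have "k * ((\<Sum>i\<in>W. y i) powr p / k powr p) = k powr (1 - p) * (\<Sum>i\<in>W. y i) powr p"
    using k by (simp add: powr_diff)
  ultimately show ?thesis by (simp add: k_def)
qed

lemma (in prob_space) chernoff_sum:
  fixes Z :: "nat \<Rightarrow> 'a \<Rightarrow> real"
  assumes ind: "indep_vars (\<lambda>_. borel) Z W" and fin: "finite W"
    and int: "\<And>i. i \<in> W \<Longrightarrow> integrable M (\<lambda>\<omega>. exp (t * Z i \<omega>))"
    and bnd: "\<And>i. i \<in> W \<Longrightarrow> (\<integral>\<omega>. exp (t * Z i \<omega>) \<partial>M) \<le> B"
    and t: "0 \<le> t"
  shows "prob {\<omega> \<in> space M. (\<Sum>i\<in>W. Z i \<omega>) > y} \<le> exp (- t * y) * B ^ card W"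
proof -
  have meas: "\<And>i. i \<in> W \<Longrightarrow> Z i \<in> borel_measurable M"
    using ind unfolding indep_vars_def by auto
  have ind2: "indep_vars (\<lambda>_. borel) (\<lambda>i \<omega>. exp (t * Z i \<omega>)) W"
    by (rule indep_vars_compose2[OF ind]) auto
  have intP: "integrable M (\<lambda>\<omega>. \<Prod>i\<in>W. exp (t * Z i \<omega>))"
    by (rule indep_vars_integrable[OF fin ind2 int])
  have eqP: "(\<integral>\<omega>. (\<Prod>i\<in>W. exp (t * Z i \<omega>)) \<partial>M) = (\<Prod>i\<in>W. \<integral>\<omega>. exp (t * Z i \<omega>) \<partial>M)"
    by (rule indep_vars_lebesgue_integral[OF fin ind2 int])
  have sub: "{\<omega> \<in> space M. (\<Sum>i\<in>W. Z i \<omega>) > y} \<subseteq> {\<omega> \<in> space M. (\<Prod>i\<in>W. exp (t * Z i \<omega>)) \<ge> exp (t * y)}"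
  proof safe
    fix \<omega> assume "\<omega> \<in> space M" "y < (\<Sum>i\<in>W. Z i \<omega>)"
    hence "t * y \<le> t * (\<Sum>i\<in>W. Z i \<omega>)" using t by (intro mult_left_mono) auto
    thus "exp (t * y) \<le> (\<Prod>i\<in>W. exp (t * Z i \<omega>))"
      by (simp add: exp_sum[OF fin, symmetric] sum_distrib_left)
  qed
  have "prob {\<omega> \<in> space M. (\<Sum>i\<in>W. Z i \<omega>) > y} \<le> prob {\<omega> \<in> space M. (\<Prod>i\<in>W. exp (t * Z i \<omega>)) \<ge> exp (t * y)}"
    apply (rule finite_measure_mono[OF sub])
    using intP by measurable
  also have "\<dots> \<le> (\<integral>\<omega>. (\<Prod>i\<in>W. exp (t * Z i \<omega>)) \<partial>M) / exp (t * y)"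
    by (rule integral_Markov_inequality_measure[OF intP]) (auto intro!: prod_nonneg AE_I2)
  also have "\<dots> \<le> B ^ card W / exp (t * y)"
  proof -
    have "(\<Prod>i\<in>W. \<integral>\<omega>. exp (t * Z i \<omega>) \<partial>M) \<le> (\<Prod>i\<in>W. B)"
      by (intro prod_mono conjI integral_nonneg_AE bnd) auto
    thus ?thesis using eqP by (simp add: divide_right_mono)
  qed
  also have "\<dots> = exp (- t * y) * B ^ card W" by (simp add: exp_minus field_simps)
  finally show ?thesis .
qed



lemma (in prob_space) exp_tail_integrable:
  fixes Z :: "'a \<Rightarrow> real"
  assumes [measurable]: "Z \<in> borel_measurable M"
    and tail: "\<And>z. z \<ge> z0 \<Longrightarrow> prob {\<omega>\<in>space M. Z \<omega> > z} \<le> exp (- a * z)"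
    and s: "0 \<le> s" "s < a"
  shows "integrable M (\<lambda>\<omega>. exp (s * Z \<omega>))"
proof -
  define A where "A m = {\<omega>\<in>space M. Z \<omega> > z0 + real m}" for m :: nat
  have A_sets[measurable]: "A m \<in> sets M" for m unfolding A_def by measurable
  define f where "f m \<omega> = exp (s * (z0 + real m + 1)) * indicator (A m) \<omega>" for m \<omega>
  have f_int: "integrable M (f m)" for m
    unfolding f_def by (intro integrable_mult_right integrable_real_indicator) (auto simp: emeasure_eq_measure)
  have f_nn: "0 \<le> f m \<omega>" for m \<omega> unfolding f_def by simp
  have f_summ: "summable (\<lambda>m. f m \<omega>)" if "\<omega> \<in> space M" for \<omega>
  proof (rule summable_finite[of "{..<nat \<lceil>Z \<omega> - z0\<rceil>}"])
    fix m assume "m \<notin> {..<nat \<lceil>Z \<omega> - z0\<rceil>}"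
    hence "Z \<omega> - z0 \<le> real m" by (simp add: not_less)
    hence "Z \<omega> \<le> z0 + real m" by linarith
    thus "f m \<omega> = 0" by (simp add: f_def A_def)
  qed simp
  have f_integral: "(\<integral>\<omega>. norm (f m \<omega>) \<partial>M) \<le> exp (s * (z0 + 1) - a * z0) * exp (s - a) ^ m" for m
  proof -
    have "(\<integral>\<omega>. norm (f m \<omega>) \<partial>M) = exp (s * (z0 + real m + 1)) * prob (A m)"
      by (simp add: f_def)
    also have "\<dots> \<le> exp (s * (z0 + real m + 1)) * exp (- a * (z0 + real m))"
      unfolding A_def by (intro mult_left_mono tail) auto
    also have "\<dots> = exp (s * (z0 + 1) - a * z0) * exp (s - a) ^ m"
      by (simp add: exp_of_nat_mult[symmetric] exp_add[symmetric] algebra_simps)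
    finally show ?thesis .
  qed
  have geo: "summable (\<lambda>m. exp (s * (z0 + 1) - a * z0) * exp (s - a) ^ m)"
    using s by (intro summable_mult summable_geometric) simp
  have sumint: "summable (\<lambda>m. \<integral>\<omega>. norm (f m \<omega>) \<partial>M)"
    by (rule summable_comparison_test'[OF geo, of 0]) (use f_integral in auto)
  have gint: "integrable M (\<lambda>\<omega>. (\<Sum>m. f m \<omega>))"
    by (rule integrable_suminf[OF f_int _ sumint]) (auto intro!: AE_I2 simp: f_summ f_nn abs_of_nonneg)
  hence gint2: "integrable M (\<lambda>\<omega>. exp (s * (z0 + 1)) + (\<Sum>m. f m \<omega>))"
    by simp
  show ?thesis
  proof (rule Bochner_Integration.integrable_bound[OF gint2])
    show "(\<lambda>\<omega>. exp (s * Z \<omega>)) \<in> borel_measurable M" by measurable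
    show "AE \<omega> in M. norm (exp (s * Z \<omega>)) \<le> norm (exp (s * (z0 + 1)) + (\<Sum>m. f m \<omega>))"
    proof (rule AE_I2)
      fix \<omega> assume \<omega>: "\<omega> \<in> space M"
      have sn: "0 \<le> (\<Sum>m. f m \<omega>)" by (rule suminf_nonneg[OF f_summ[OF \<omega>] f_nn])
      have "exp (s * Z \<omega>) \<le> exp (s * (z0 + 1)) + (\<Sum>m. f m \<omega>)"
      proof (cases "Z \<omega> \<le> z0 + 1")
        case True
        hence "exp (s * Z \<omega>) \<le> exp (s * (z0 + 1))" using s by (simp add: mult_left_mono)
        thus ?thesis using sn by linarith
      next
        case False
        define c where "c = \<lceil>Z \<omega> - z0\<rceil>"
        have c2: "c \<ge> 2" using False unfolding c_def by linarith
        define m where "m = nat c - 1"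
        have mr: "real m = real_of_int c - 1" using c2 unfolding m_def by auto
        have "z0 + real m < Z \<omega>" using mr unfolding c_def by linarith
        hence inA: "\<omega> \<in> A m" using \<omega> by (simp add: A_def)
        have "Z \<omega> \<le> z0 + real m + 1" using mr unfolding c_def by linarith
        hence "exp (s * Z \<omega>) \<le> f m \<omega>" using inA s by (simp add: f_def mult_left_mono)
        also have "f m \<omega> \<le> (\<Sum>m. f m \<omega>)"
          using sum_le_suminf[OF f_summ[OF \<omega>], of "{m}"] f_nn by simp
        finally show ?thesis using exp_gt_zero[of "s * (z0 + 1)"] by linarith
      qed
      thus "norm (exp (s * Z \<omega>)) \<le> norm (exp (s * (z0 + 1)) + (\<Sum>m. f m \<omega>))"
        using sn by simp
    qed
  qed
qed


lemma psum_diff: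
  assumes "i \<le> j"
  shows "psum X j \<omega> - psum X i \<omega> = (\<Sum>m\<in>{Suc i..j}. X m \<omega>)"
proof -
  have "{1..j} = {1..i} \<union> {Suc i..j}" using assms by auto
  hence "psum X j \<omega> = psum X i \<omega> + (\<Sum>m\<in>{Suc i..j}. X m \<omega>)"
    unfolding psum_def by (simp add: sum.union_disjoint)
  thus ?thesis by simp
qed

lemma Umax_image: "{X k \<omega> | k. 1 \<le> k \<and> k \<le> n} = (\<lambda>k. X k \<omega>) ` {1..n}"
  by auto

lemma Mmax_image: "{(psum X j \<omega> - psum X i \<omega>) / sqrt (real (j - i)) | i j. i < j \<and> j \<le> n}
   = (\<lambda>(i,j). (psum X j \<omega> - psum X i \<omega>) / sqrt (real (j - i))) ` {(i,j). i < j \<and> j \<le> n}"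
  by auto

lemma pairs_finite: "finite {(i,j). i < j \<and> j \<le> (n::nat)}"
  by (rule finite_subset[of _ "{..n} \<times> {..n}"]) auto

lemma psum_measurable:
  assumes "\<And>k. k \<ge> 1 \<Longrightarrow> X k \<in> borel_measurable M"
  shows "psum X j \<in> borel_measurable M"
proof -
  have "(\<lambda>\<omega>. \<Sum>m\<in>{1..j}. X m \<omega>) \<in> borel_measurable M"
    by (rule borel_measurable_sum) (use assms in auto)
  thus ?thesis by (simp add: psum_def[abs_def])
qed

lemma Mmax_measurable:
  assumes "\<And>k. k \<ge> 1 \<Longrightarrow> X k \<in> borel_measurable M"
  shows "Mmax X n \<in> borel_measurable M"
proof -
  have [measurable]: "psum X j \<in> borel_measurable M" for j by (rule psum_measurable[OF assms])
  have "(\<lambda>\<omega>. Max ((\<lambda>(i,j). (psum X j \<omega> - psum X i \<omega>) / sqrt (real (j - i))) ` {(i,j). i < j \<and> j \<le> n})) \<in> borel_measurable M"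
    by (rule borel_measurable_Max[OF pairs_finite]) (auto split: prod.splits)
  thus ?thesis unfolding Mmax_def[abs_def] Mmax_image .
qed

lemma Umax_measurable:
  assumes "\<And>k. k \<ge> 1 \<Longrightarrow> X k \<in> borel_measurable M"
  shows "Umax X n \<in> borel_measurable M"
proof -
  have "(\<lambda>\<omega>. Max ((\<lambda>k. X k \<omega>) ` {1..n})) \<in> borel_measurable M"
    by (rule borel_measurable_Max) (use assms in auto)
  thus ?thesis unfolding Umax_def[abs_def] Umax_image .
qed

lemma Mmax_eq_Umax:
  assumes n: "1 \<le> n" and vU: "v < Umax X n \<omega>"
    and nb: "\<And>i j. i < j \<Longrightarrow> j \<le> n \<Longrightarrow> 2 \<le> j - i \<Longrightarrow> psum X j \<omega> - psum X i \<omega> \<le> sqrt (real (j - i)) * v"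
  shows "Mmax X n \<omega> = Umax X n \<omega>"
proof -
  define T where "T = {(psum X j \<omega> - psum X i \<omega>) / sqrt (real (j - i)) | i j. i < j \<and> j \<le> n}"
  have Ueq: "Umax X n \<omega> = Max ((\<lambda>k. X k \<omega>) ` {1..n})" unfolding Umax_def Umax_image ..
  have fU: "finite ((\<lambda>k. X k \<omega>) ` {1..n})" "(\<lambda>k. X k \<omega>) ` {1..n} \<noteq> {}" using n by auto
  obtain m where m: "m \<in> {1..n}" "Umax X n \<omega> = X m \<omega>"
    using Max_in[OF fU] Ueq by auto
  have Uge: "X k \<omega> \<le> Umax X n \<omega>" if "k \<in> {1..n}" for k
    using Max_ge[OF fU(1)] that Ueq by auto
  have one: "psum X (Suc i) \<omega> - psum X i \<omega> = X (Suc i) \<omega>" for i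
    using psum_diff[of i "Suc i" X \<omega>] by simp
  have fT: "finite T" unfolding T_def Mmax_image by (intro finite_imageI pairs_finite)
  have inT: "Umax X n \<omega> \<in> T"
  proof -
    have "(psum X m \<omega> - psum X (m - 1) \<omega>) / sqrt (real (m - (m - 1))) = X m \<omega>"
      using m(1) one[of "m - 1"] by simp
    moreover have "m - 1 < m \<and> m \<le> n" using m(1) by auto
    ultimately show ?thesis unfolding T_def using m(2) by force
  qed
  have leT: "x \<le> Umax X n \<omega>" if "x \<in> T" for x
  proof -
    obtain i j where ij: "i < j" "j \<le> n" "x = (psum X j \<omega> - psum X i \<omega>) / sqrt (real (j - i))"
      using \<open>x \<in> T\<close> unfolding T_def by blast
    show ?thesis
    proof (cases "j - i = 1")
      case True
      hence "j = Suc i" by simp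
      hence "x = X j \<omega>" using ij one[of i] by simp
      thus ?thesis using Uge[of j] ij by simp
    next
      case False
      hence k2: "2 \<le> j - i" using ij by simp
      have sp: "sqrt (real (j - i)) > 0" using ij by simp
      have "x \<le> v" using nb[OF ij(1,2) k2] sp ij(3) by (simp add: divide_le_eq mult.commute)
      thus ?thesis using vU by simp
    qed
  qed
  have "Max T = Umax X n \<omega>" by (rule Max_eqI[OF fT leT inT])
  thus ?thesis unfolding Mmax_def T_def .
qed
lemma asy1: assumes "c > 0" "1 \<le> a" shows "eventually (\<lambda>n::nat. (c * ln n) powr (1/a) \<ge> x0) sequentially"
  using assms by real_asymp
lemma asy2: assumes "c > 0" "1 \<le> a" "a < 2" "C > 0"
  shows "eventually (\<lambda>n::nat. ((c * ln n) powr (1/a)) powr 2 \<ge> C * ln n) sequentially"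
  using assms by real_asymp
lemma asy3: assumes "K > 0" "a < 2" "C > 0" "t > 0"
  shows "eventually (\<lambda>n::nat. (6 * ln n / t) powr a * C \<le> K * (ln n)\<^sup>2) sequentially"
  using assms by real_asymp
lemma asy4: assumes "e < 1"
  shows "((\<lambda>n::nat. exp (- (n * n powr (-e)))) \<longlongrightarrow> 0) sequentially"
  using assms by real_asymp
lemma asy5: assumes "g > 1"
  shows "((\<lambda>n::nat. K * ((ln n)\<^sup>2 * n powr (1-g)) + 1/n) \<longlongrightarrow> 0) sequentially"
proof -
  have "((\<lambda>n::nat. (ln n)\<^sup>2 * n powr (1-g)) \<longlongrightarrow> 0) sequentially" using assms by real_asymp
  moreover have "((\<lambda>n::nat. 1 / real n) \<longlongrightarrow> 0) sequentially" by real_asymp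
  ultimately show ?thesis using tendsto_add[OF tendsto_mult_right_zero[of _ sequentially K]] by fastforce
qed

lemma distr_transfer:
  fixes X Y :: "'a \<Rightarrow> real" and g :: "real \<Rightarrow> real"
  assumes [measurable]: "X \<in> borel_measurable M" "Y \<in> borel_measurable M" "g \<in> borel_measurable borel"
    and eq: "distr M borel X = distr M borel Y"
  shows "integrable M (\<lambda>\<omega>. g (X \<omega>)) = integrable M (\<lambda>\<omega>. g (Y \<omega>))"
    and "(\<integral>\<omega>. g (X \<omega>) \<partial>M) = (\<integral>\<omega>. g (Y \<omega>) \<partial>M)"
proof -
  have "integrable M (\<lambda>\<omega>. g (X \<omega>)) = integrable (distr M borel X) g"
    by (rule integrable_distr_eq[symmetric]) auto
  also have "\<dots> = integrable (distr M borel Y) g" by (simp add: eq)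
  also have "\<dots> = integrable M (\<lambda>\<omega>. g (Y \<omega>))"
    by (rule integrable_distr_eq) auto
  finally show "integrable M (\<lambda>\<omega>. g (X \<omega>)) = integrable M (\<lambda>\<omega>. g (Y \<omega>))" .
  have "(\<integral>\<omega>. g (X \<omega>) \<partial>M) = (\<integral>x. g x \<partial>distr M borel X)"
    by (rule integral_distr[symmetric]) auto
  also have "\<dots> = (\<integral>x. g x \<partial>distr M borel Y)" by (simp add: eq)
  also have "\<dots> = (\<integral>\<omega>. g (Y \<omega>) \<partial>M)"
    by (rule integral_distr) auto
  finally show "(\<integral>\<omega>. g (X \<omega>) \<partial>M) = (\<integral>\<omega>. g (Y \<omega>) \<partial>M)" .
qed

theorem theorem1p7:
  fixes M :: "'a measure" and X :: "nat \<Rightarrow> 'a \<Rightarrow> real" and \<alpha> D :: real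
  assumes "prob_space M"
    and "\<And>k. k \<ge> 1 \<Longrightarrow> X k \<in> borel_measurable M"
    and "prob_space.indep_vars M (\<lambda>_. borel) X {1..}"
    and "\<And>k. k \<ge> 1 \<Longrightarrow> distr M borel (X k) = distr M borel (X 1)"
    and "integrable M (X 1)" and "(\<integral>\<omega>. X 1 \<omega> \<partial>M) = 0"
    and "integrable M (\<lambda>\<omega>. (X 1 \<omega>)\<^sup>2)" and "(\<integral>\<omega>. (X 1 \<omega>)\<^sup>2 \<partial>M) = 1"
    and "1 \<le> \<alpha>" and "\<alpha> < 2" and "D > 0"
    and "((\<lambda>x. ln (measure M {\<omega> \<in> space M. X 1 \<omega> > x}) / x powr \<alpha>) \<longlongrightarrow> - D) at_top"
  shows "(\<lambda>n. measure M {\<omega> \<in> space M. Mmax X n \<omega> = Umax X n \<omega>}) \<longlonglongrightarrow> 1"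
proof -
  interpret prob_space M by fact
  have X1m[measurable]: "X 1 \<in> borel_measurable M" using assms(2) by simp
  have a1: "1 \<le> \<alpha>" and a2: "\<alpha> < 2" and Dpos: "D > 0" using assms(9-11) by auto
  define p where "p x = prob {\<omega>\<in>space M. X 1 \<omega> > x}" for x
  define \<beta> where "\<beta> = 1 - \<alpha>/2"
  have \<beta>: "0 < \<beta>" using a2 by (simp add: \<beta>_def)
  define \<gamma> where "\<gamma> = (2::real) powr \<beta>"
  define q where "q = (2::real) powr (\<beta>/8)"
  have q1: "q > 1" using \<beta> by (simp add: q_def)
  have q8: "q ^ 8 = \<gamma>"
    unfolding q_def \<gamma>_def by (simp add: powr_realpow[symmetric] powr_powr)
  define D1 where "D1 = D / q"
  define D2 where "D2 = D * q"
  define s where "s = D / q^2"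
  define s' where "s' = D / q^3"
  define c where "c = 1 / (D * q^3)"
  have qpos: "q > 0" using q1 by simp
  have D1pos: "0 < D1" and D1D: "D1 < D" and DD2: "D < D2"
    using Dpos q1 by (auto simp: D1_def D2_def field_simps)
  have s_pos: "0 < s'" "s' < s" "s < D1"
    using Dpos q1 by (auto simp: s_def s'_def D1_def field_simps power_strict_increasing_iff[of q 1 2, simplified]
        power_strict_increasing_iff[of q 2 3, simplified]  power_strict_increasing_iff[of q 1 3, simplified])
  have c_pos: "0 < c" using Dpos qpos by (simp add: c_def)
  have D2c: "D2 * c < 1"
  proof -
    have "D2 * c = 1 / q^2" using Dpos qpos by (simp add: D2_def c_def field_simps power_eq_if)
    moreover have "q^2 > 1" using q1 by (simp add: one_less_power)
    ultimately show ?thesis by (simp add: divide_less_eq)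
  qed
  define g where "g = \<gamma> * s' * c"
  have g1: "g > 1"
  proof -
    have "g = q^8 / q^6" using Dpos qpos by (simp add: g_def q8[symmetric] s'_def c_def field_simps)
    also have "\<dots> = q^2" using qpos by (simp add: field_simps)
    finally show ?thesis using q1 by (simp add: one_less_power)
  qed
  have ev1: "eventually (\<lambda>x. ln (p x) / x powr \<alpha> < - D1) at_top"
    using order_tendstoD(2)[OF assms(12)] D1D unfolding p_def by auto
  have ev2: "eventually (\<lambda>x. - D2 < ln (p x) / x powr \<alpha>) at_top"
    using order_tendstoD(1)[OF assms(12)] DD2 unfolding p_def by auto
  obtain x0 where x0: "x0 \<ge> 1" and x0b: "\<And>x. x \<ge> x0 \<Longrightarrow> ln (p x) / x powr \<alpha> < - D1 \<and> - D2 < ln (p x) / x powr \<alpha>"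
    using eventually_conj[OF eventually_conj[OF ev1 ev2] eventually_ge_at_top[of 1]]
    unfolding eventually_at_top_linorder by (metis order.trans nle_le)
  have p_pos: "p x > 0" and p_up: "p x \<le> exp (- D1 * x powr \<alpha>)" and p_lo: "exp (- D2 * x powr \<alpha>) \<le> p x"
    if x: "x \<ge> x0" for x
  proof -
    have xp: "x powr \<alpha> > 0" using x x0 by simp
    have h1: "ln (p x) / x powr \<alpha> < - D1" and h2: "- D2 < ln (p x) / x powr \<alpha>" using x0b[OF x] by auto
    have "p x \<ge> 0" by (simp add: p_def)
    moreover have "p x \<noteq> 0" using h1 D1pos by auto
    ultimately show pp: "p x > 0" by simp
    have "ln (p x) < - D1 * x powr \<alpha>" using h1 xp by (simp add: pos_divide_less_eq)
    hence "exp (ln (p x)) < exp (- D1 * x powr \<alpha>)" by simp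
    thus "p x \<le> exp (- D1 * x powr \<alpha>)" using pp by simp
    have "- D2 * x powr \<alpha> < ln (p x)" using h2 xp by (simp add: pos_less_divide_eq)
    hence "exp (- D2 * x powr \<alpha>) < exp (ln (p x))" by simp
    thus "exp (- D2 * x powr \<alpha>) \<le> p x" using pp by simp
  qed
  define Y where "Y k \<omega> = (max 0 (X k \<omega>)) powr \<alpha>" for k \<omega>
  have Y1m[measurable]: "Y 1 \<in> borel_measurable M" unfolding Y_def by measurable
  have Ytail: "prob {\<omega>\<in>space M. Y 1 \<omega> > y} \<le> exp (- D1 * y)" if y: "y \<ge> x0 powr \<alpha>" for y
  proof -
    have ypos: "y \<ge> 1" using y x0 a1 ge_one_powr_ge_zero[of x0 \<alpha>] by linarith
    define z where "z = y powr (1/\<alpha>)"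
    have zz: "z powr \<alpha> = y" using ypos a1 by (simp add: z_def powr_powr)
    have zx0: "z \<ge> x0"
    proof -
      have "(x0 powr \<alpha>) powr (1/\<alpha>) \<le> y powr (1/\<alpha>)" using y a1 x0 by (intro powr_mono2) auto
      thus ?thesis using a1 x0 by (simp add: z_def powr_powr)
    qed
    have "{\<omega>\<in>space M. Y 1 \<omega> > y} \<subseteq> {\<omega>\<in>space M. X 1 \<omega> > z}"
    proof safe
      fix \<omega> assume \<omega>: "\<omega> \<in> space M" "y < Y 1 \<omega>"
      show "z < X 1 \<omega>"
      proof (rule ccontr)
        assume "\<not> z < X 1 \<omega>"
        hence "max 0 (X 1 \<omega>) \<le> z" using zx0 x0 by auto
        hence "Y 1 \<omega> \<le> z powr \<alpha>" unfolding Y_def using a1 by (intro powr_mono2) auto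
        thus False using \<omega> zz by simp
      qed
    qed
    hence "prob {\<omega>\<in>space M. Y 1 \<omega> > y} \<le> p z" unfolding p_def
      by (rule finite_measure_mono) measurable
    also have "\<dots> \<le> exp (- D1 * y)" using p_up[OF zx0] zz by simp
    finally show ?thesis .
  qed
  have Yint: "integrable M (\<lambda>\<omega>. exp (s * Y 1 \<omega>))"
    by (rule exp_tail_integrable[OF Y1m Ytail]) (use s_pos in auto)
  define \<psi> where "\<psi> = (\<integral>\<omega>. exp (s * Y 1 \<omega>) \<partial>M)"
  define B where "B = max 1 \<psi>"
  have B1: "B \<ge> 1" by (simp add: B_def)
  define t0 where "t0 = D1 / 4"
  have t0: "t0 > 0" using D1pos by (simp add: t0_def)
  define Z where "Z \<omega> = max 0 (X 1 \<omega>)" for \<omega>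
  have Zm[measurable]: "Z \<in> borel_measurable M" unfolding Z_def by measurable
  have Ztail: "prob {\<omega>\<in>space M. Z \<omega> > z} \<le> exp (- D1 * z)" if z: "z \<ge> x0" for z
  proof -
    have "{\<omega>\<in>space M. Z \<omega> > z} = {\<omega>\<in>space M. X 1 \<omega> > z}" using z x0 by (auto simp: Z_def)
    hence "prob {\<omega>\<in>space M. Z \<omega> > z} = p z" by (simp add: p_def)
    also have "\<dots> \<le> exp (- D1 * z powr \<alpha>)" by (rule p_up[OF z])
    also have "\<dots> \<le> exp (- D1 * z)"
    proof -
      have "z powr 1 \<le> z powr \<alpha>" using z x0 a1 by (intro powr_mono) auto
      thus ?thesis using D1pos z x0 by simp
    qed
    finally show ?thesis .
  qed
  have Zint: "integrable M (\<lambda>\<omega>. exp ((2 * t0) * Z \<omega>))"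
    by (rule exp_tail_integrable[OF Zm Ztail]) (use t0 D1pos in \<open>auto simp: t0_def\<close>)
  define H where "H \<omega> = (X 1 \<omega>)\<^sup>2 * exp (t0 * Z \<omega>)" for \<omega>
  have Hm[measurable]: "H \<in> borel_measurable M" unfolding H_def by measurable
  have Hbound: "H \<omega> \<le> (X 1 \<omega>)\<^sup>2 + (2 / t0\<^sup>2) * exp ((2 * t0) * Z \<omega>)" for \<omega>
  proof (cases "X 1 \<omega> \<le> 0")
    case True thus ?thesis by (simp add: H_def Z_def)
  next
    case False
    hence ZX: "Z \<omega> = X 1 \<omega>" by (simp add: Z_def)
    define y where "y = t0 * Z \<omega>"
    have y0: "y \<ge> 0" using False t0 ZX by (simp add: y_def)
    have "y\<^sup>2 / 2 \<le> exp y"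
    proof -
      obtain u where u: "exp y = (\<Sum>m<3. (y ^ m) / fact m) + (exp u / fact 3) * y ^ 3"
        using Maclaurin_exp_le[of y 3] by blast
      have "(\<Sum>m<3. (y ^ m) / fact m) = 1 + y + y\<^sup>2/2" by (simp add: eval_nat_numeral)
      moreover have "0 \<le> (exp u / fact 3) * y ^ 3" using y0 by simp
      ultimately show ?thesis using u y0 by simp
    qed
    hence "(Z \<omega>)\<^sup>2 \<le> (2 / t0\<^sup>2) * exp (t0 * Z \<omega>)"
      using t0 by (simp add: y_def power_mult_distrib field_simps)
    hence "(Z \<omega>)\<^sup>2 * exp (t0 * Z \<omega>) \<le> (2 / t0\<^sup>2) * exp (t0 * Z \<omega>) * exp (t0 * Z \<omega>)"
      by (rule mult_right_mono) simp
    also have "\<dots> = (2 / t0\<^sup>2) * exp ((2 * t0) * Z \<omega>)" by (simp add: exp_add[symmetric] algebra_simps)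
    finally have "H \<omega> \<le> (2 / t0\<^sup>2) * exp ((2 * t0) * Z \<omega>)" using ZX by (simp add: H_def)
    moreover have "0 \<le> (X 1 \<omega>)\<^sup>2" by simp
    ultimately show ?thesis by linarith
  qed
  have Hint: "integrable M H"
  proof (rule Bochner_Integration.integrable_bound)
    show "integrable M (\<lambda>\<omega>. (X 1 \<omega>)\<^sup>2 + (2 / t0\<^sup>2) * exp ((2 * t0) * Z \<omega>))"
      using assms(7) Zint by auto
    show "AE \<omega> in M. norm (H \<omega>) \<le> norm ((X 1 \<omega>)\<^sup>2 + (2 / t0\<^sup>2) * exp ((2 * t0) * Z \<omega>))"
      using Hbound by (intro AE_I2) (auto simp: H_def)
  qed simp
  define C where "C = (\<integral>\<omega>. H \<omega> \<partial>M) / 2 + 1"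
  have Hnn: "0 \<le> (\<integral>\<omega>. H \<omega> \<partial>M)" by (intro integral_nonneg_AE AE_I2) (simp add: H_def)
  have Cpos: "C > 0" unfolding C_def using Hnn by simp
  have mgf: "integrable M (\<lambda>\<omega>. exp (t * X 1 \<omega>)) \<and> (\<integral>\<omega>. exp (t * X 1 \<omega>) \<partial>M) \<le> exp (C * t\<^sup>2)"
    if t: "0 \<le> t" "t \<le> t0" for t
  proof -
    have pw: "exp (t * X 1 \<omega>) \<le> 1 + t * X 1 \<omega> + t\<^sup>2 / 2 * H \<omega>" for \<omega>
    proof -
      have "t * X 1 \<omega> \<le> t0 * Z \<omega>"
      proof (cases "X 1 \<omega> \<le> 0")
        case True thus ?thesis using t by (simp add: Z_def mult_nonneg_nonpos)
      next
        case False thus ?thesis using t by (simp add: Z_def mult_right_mono)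
      qed
      hence "max (t * X 1 \<omega>) 0 \<le> t0 * Z \<omega>" using t0 by (simp add: Z_def)
      hence "exp (max (t * X 1 \<omega>) 0) \<le> exp (t0 * Z \<omega>)" by simp
      hence "(t * X 1 \<omega>)\<^sup>2 / 2 * exp (max (t * X 1 \<omega>) 0) \<le> (t * X 1 \<omega>)\<^sup>2 / 2 * exp (t0 * Z \<omega>)"
        by (intro mult_left_mono) auto
      also have "\<dots> = t\<^sup>2 / 2 * H \<omega>" by (simp add: H_def power_mult_distrib)
      finally show ?thesis using exp_quad_bound[of "t * X 1 \<omega>"] by linarith
    qed
    have gint: "integrable M (\<lambda>\<omega>. 1 + t * X 1 \<omega> + t\<^sup>2 / 2 * H \<omega>)"
      using assms(5) Hint by auto
    have eint: "integrable M (\<lambda>\<omega>. exp (t * X 1 \<omega>))"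
    proof (rule Bochner_Integration.integrable_bound[OF gint])
      show "AE \<omega> in M. norm (exp (t * X 1 \<omega>)) \<le> norm (1 + t * X 1 \<omega> + t\<^sup>2 / 2 * H \<omega>)"
        using pw by (intro AE_I2) (smt (verit, best) exp_gt_zero real_norm_def)
    qed measurable
    have "(\<integral>\<omega>. exp (t * X 1 \<omega>) \<partial>M) \<le> (\<integral>\<omega>. 1 + t * X 1 \<omega> + t\<^sup>2 / 2 * H \<omega> \<partial>M)"
      by (intro integral_mono eint gint pw)
    also have "\<dots> = 1 + t\<^sup>2 * ((\<integral>\<omega>. H \<omega> \<partial>M) / 2)"
      using assms(5,6) Hint by (simp add: prob_space)
    also have "\<dots> \<le> 1 + C * t\<^sup>2" using t unfolding C_def by (simp add: algebra_simps)
    also have "\<dots> \<le> exp (C * t\<^sup>2)" by (rule exp_ge_add_one_self)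
    finally show ?thesis using eint by simp
  qed

  have Xm[measurable]: "X k \<in> borel_measurable M" if "k \<ge> 1" for k using assms(2) that by simp
  have indW: "indep_vars (\<lambda>_. borel) X {Suc i..j}" for i j
    by (rule indep_vars_subset[OF assms(3)]) auto
  have win_small: "prob {\<omega>\<in>space M. sqrt (real (j - i)) * v < psum X j \<omega> - psum X i \<omega>}
      \<le> exp (- s * (real (j - i) powr \<beta> * v powr \<alpha>)) * B ^ (j - i)"
    if ij: "i < j" and v: "0 < v" for i j v
  proof -
    define W where "W = {Suc i..j}"
    define k where "k = real (j - i)"
    have cW: "card W = j - i" by (simp add: W_def)
    have Wne: "W \<noteq> {}" "finite W" using ij by (auto simp: W_def)
    have kpos: "k > 0" using ij by (simp add: k_def)
    have sub: "{\<omega>\<in>space M. sqrt k * v < psum X j \<omega> - psum X i \<omega>}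
        \<subseteq> {\<omega>\<in>space M. k powr \<beta> * v powr \<alpha> < (\<Sum>m\<in>W. Y m \<omega>)}"
    proof safe
      fix \<omega> assume \<omega>: "\<omega> \<in> space M" "sqrt k * v < psum X j \<omega> - psum X i \<omega>"
      have "sqrt k * v < (\<Sum>m\<in>W. X m \<omega>)" using \<omega> ij psum_diff[of i j X \<omega>] by (simp add: W_def)
      also have "\<dots> \<le> (\<Sum>m\<in>W. max 0 (X m \<omega>))" by (intro sum_mono) auto
      finally have lt: "sqrt k * v < (\<Sum>m\<in>W. max 0 (X m \<omega>))" .
      have skv: "0 < sqrt k * v" using kpos v by simp
      have pm: "k powr (1 - \<alpha>) * (\<Sum>m\<in>W. max 0 (X m \<omega>)) powr \<alpha> \<le> (\<Sum>m\<in>W. Y m \<omega>)"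
        using power_mean_sum[OF Wne(2) Wne(1) a1, of "\<lambda>m. max 0 (X m \<omega>)"] by (simp add: Y_def cW k_def)
      have "(sqrt k * v) powr \<alpha> < (\<Sum>m\<in>W. max 0 (X m \<omega>)) powr \<alpha>"
        using lt skv a1 by (intro powr_less_mono2) auto
      hence "k powr (1 - \<alpha>) * (sqrt k * v) powr \<alpha> < k powr (1 - \<alpha>) * (\<Sum>m\<in>W. max 0 (X m \<omega>)) powr \<alpha>"
        using kpos by simp
      moreover have "k powr (1 - \<alpha>) * (sqrt k * v) powr \<alpha> = k powr \<beta> * v powr \<alpha>"
      proof -
        have "(sqrt k * v) powr \<alpha> = k powr (\<alpha>/2) * v powr \<alpha>"
          using kpos v by (simp add: powr_mult powr_half_sqrt[symmetric] powr_powr)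
        thus ?thesis using kpos by (simp add: \<beta>_def powr_add[symmetric] algebra_simps)
      qed
      ultimately show "k powr \<beta> * v powr \<alpha> < (\<Sum>m\<in>W. Y m \<omega>)" using pm by linarith
    qed
    have indY: "indep_vars (\<lambda>_. borel) Y W"
      unfolding Y_def W_def by (rule indep_vars_compose2[OF indW]) measurable
    have trY: "integrable M (\<lambda>\<omega>. exp (s * Y m \<omega>)) \<and> (\<integral>\<omega>. exp (s * Y m \<omega>) \<partial>M) \<le> B" if m: "m \<in> W" for m
    proof -
      have m1: "m \<ge> 1" using m by (simp add: W_def)
      note tr = distr_transfer[OF Xm[OF m1] X1m _ assms(4)[OF m1], of "\<lambda>x. exp (s * (max 0 x) powr \<alpha>)"]
      have "integrable M (\<lambda>\<omega>. exp (s * Y m \<omega>))" using tr(1) Yint by (simp add: Y_def)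
      moreover have "(\<integral>\<omega>. exp (s * Y m \<omega>) \<partial>M) = \<psi>" using tr(2) by (simp add: Y_def \<psi>_def)
      ultimately show ?thesis by (simp add: B_def)
    qed
    have "prob {\<omega>\<in>space M. sqrt k * v < psum X j \<omega> - psum X i \<omega>}
        \<le> prob {\<omega>\<in>space M. k powr \<beta> * v powr \<alpha> < (\<Sum>m\<in>W. Y m \<omega>)}"
    proof (rule finite_measure_mono[OF sub])
      have "\<And>m. m \<in> W \<Longrightarrow> Y m \<in> borel_measurable M" using indY unfolding indep_vars_def by auto
      thus "{\<omega>\<in>space M. k powr \<beta> * v powr \<alpha> < (\<Sum>m\<in>W. Y m \<omega>)} \<in> events"
        using Wne(2) by measurable
    qed
    also have "\<dots> \<le> exp (- s * (k powr \<beta> * v powr \<alpha>)) * B ^ card W"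
      by (rule chernoff_sum[OF indY Wne(2)]) (use trY s_pos in auto)
    finally show ?thesis by (simp add: k_def cW)
  qed
  have win_large: "prob {\<omega>\<in>space M. y < psum X j \<omega> - psum X i \<omega>} \<le> exp (- t * y) * exp (C * t\<^sup>2) ^ (j - i)"
    if ij: "i < j" and t: "0 \<le> t" "t \<le> t0" for i j y t
  proof -
    define W where "W = {Suc i..j}"
    have cW: "card W = j - i" by (simp add: W_def)
    have fW: "finite W" by (simp add: W_def)
    have eq: "{\<omega>\<in>space M. y < psum X j \<omega> - psum X i \<omega>} = {\<omega>\<in>space M. y < (\<Sum>m\<in>W. X m \<omega>)}"
      using ij psum_diff[of i j X] by (auto simp: W_def)
    have trX: "integrable M (\<lambda>\<omega>. exp (t * X m \<omega>)) \<and> (\<integral>\<omega>. exp (t * X m \<omega>) \<partial>M) \<le> exp (C * t\<^sup>2)" if m: "m \<in> W" for m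
    proof -
      have m1: "m \<ge> 1" using m by (simp add: W_def)
      note tr = distr_transfer[OF Xm[OF m1] X1m _ assms(4)[OF m1], of "\<lambda>x. exp (t * x)"]
      show ?thesis using tr mgf[OF t] by simp
    qed
    have "prob {\<omega>\<in>space M. y < (\<Sum>m\<in>W. X m \<omega>)} \<le> exp (- t * y) * exp (C * t\<^sup>2) ^ card W"
      by (rule chernoff_sum[OF indW[of i j, folded W_def] fW]) (use trX t in auto)
    thus ?thesis using eq cW by simp
  qed

  define lB where "lB = ln B"
  have lB0: "lB \<ge> 0" using B1 by (simp add: lB_def)
  have BlB: "B = exp lB" using B1 by (simp add: lB_def)
  have Mm[measurable]: "Mmax X n \<in> borel_measurable M" for n by (rule Mmax_measurable[OF assms(2)])
  have Um[measurable]: "Umax X n \<in> borel_measurable M" for n by (rule Umax_measurable[OF assms(2)])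
  have psm[measurable]: "psum X j \<in> borel_measurable M" for j by (rule psum_measurable[OF assms(2)])
  define b where "b n = exp (- (real n * real n powr (- (D2 * c)))) + ((36 / t0\<^sup>2) * ((ln (real n))\<^sup>2 * real n powr (1 - g)) + 1 / real n)" for n :: nat
  have main: "1 - b n \<le> prob {\<omega>\<in>space M. Mmax X n \<omega> = Umax X n \<omega>}"
    if hn: "3 \<le> n" "max x0 1 \<le> (c * ln (real n)) powr (1/\<alpha>)"
       "(12 * C) * ln (real n) \<le> ((c * ln (real n)) powr (1/\<alpha>)) powr 2"
       "(6 * ln (real n) / t0) powr \<alpha> * (lB + 1) \<le> ((s - s') * c * c) * (ln (real n))\<^sup>2" for n
  proof -
    define LL where "LL = ln (real n)"
    define V where "V = (c * LL) powr (1/\<alpha>)"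
    define RR where "RR = 6 * LL / (t0 * V)"
    have LL0: "LL > 0" using hn(1) by (simp add: LL_def)
    have V1: "V \<ge> 1" "V \<ge> x0" using hn(2) by (auto simp: V_def LL_def)
    have Vpos: "V > 0" using V1 by simp
    have Va: "V powr \<alpha> = c * LL" using c_pos LL0 a1 by (simp add: V_def powr_powr)
    have V2a: "12 * C * LL \<le> V powr 2" using hn(3) unfolding V_def LL_def .
    have V2b: "V powr 2 = V\<^sup>2" using Vpos by simp
    have V2: "12 * C * LL \<le> V\<^sup>2" using V2a V2b by simp
    have hB: "(6 * LL / t0) powr \<alpha> * (lB + 1) \<le> ((s - s') * c * c) * LL\<^sup>2" using hn(4) by (simp add: LL_def)
    have RR0: "RR > 0" using LL0 t0 Vpos by (simp add: RR_def)
    have RRle: "RR \<le> 6 * LL / t0"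
      using LL0 t0 V1 by (simp add: RR_def field_simps mult_left_mono)
    define E where "E i j = {\<omega>\<in>space M. sqrt (real (j - i)) * V < psum X j \<omega> - psum X i \<omega>}" for i j
    have Em[measurable]: "E i j \<in> sets M" for i j unfolding E_def by measurable
    have small: "prob (E i j) \<le> exp (- g * LL)" if ij: "i < j" "2 \<le> j - i" "sqrt (real (j - i)) \<le> RR" for i j
    proof -
      define k where "k = real (j - i)"
      have k2: "k \<ge> 2" using ij by (simp add: k_def)
      have "prob (E i j) \<le> exp (- s * (k powr \<beta> * V powr \<alpha>)) * B ^ (j - i)"
        using win_small[OF ij(1) Vpos] by (simp add: E_def k_def)
      also have "\<dots> = exp (- s * (k powr \<beta> * (c * LL))) * exp (k * lB)"
        by (simp add: Va BlB exp_of_nat_mult[symmetric] k_def)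
      also have "\<dots> = exp (- s * (k powr \<beta> * (c * LL)) + k * lB)" by (rule exp_add[symmetric])
      also have "\<dots> \<le> exp (- g * LL)"
      proof -
        have kk: "k = k powr \<beta> * k powr (\<alpha>/2)" using k2 by (simp add: powr_add[symmetric] \<beta>_def)
        have "k powr (\<alpha>/2) = (sqrt k) powr \<alpha>"
          using k2 by (simp add: powr_half_sqrt[symmetric] powr_powr)
        also have "\<dots> \<le> RR powr \<alpha>" using ij(3) a1 by (intro powr_mono2) (auto simp: k_def)
        also have "\<dots> = (6 * LL / t0) powr \<alpha> / V powr \<alpha>"
          using LL0 t0 Vpos by (simp add: RR_def powr_divide[symmetric] field_simps)
        also have "\<dots> = (6 * LL / t0) powr \<alpha> / (c * LL)" by (simp add: Va)
        finally have ka: "k powr (\<alpha>/2) \<le> (6 * LL / t0) powr \<alpha> / (c * LL)" .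
        have "k powr (\<alpha>/2) * lB \<le> (6 * LL / t0) powr \<alpha> / (c * LL) * lB"
          by (rule mult_right_mono[OF ka lB0])
        also have "\<dots> \<le> (6 * LL / t0) powr \<alpha> / (c * LL) * (lB + 1)"
          using c_pos LL0 by (intro mult_left_mono) auto
        also have "\<dots> = ((6 * LL / t0) powr \<alpha> * (lB + 1)) / (c * LL)" by simp
        also have "\<dots> \<le> (((s - s') * c * c) * LL\<^sup>2) / (c * LL)"
          using hB c_pos LL0 by (intro divide_right_mono) auto
        also have "\<dots> = (s - s') * c * LL" using c_pos LL0 by (simp add: field_simps power2_eq_square)
        finally have kb: "k powr (\<alpha>/2) * lB \<le> (s - s') * c * LL" .
        have kpb: "k powr \<beta> \<ge> 0" by simp
        have "k * lB = k powr \<beta> * (k powr (\<alpha>/2) * lB)" by (subst kk) (simp add: algebra_simps)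
        also have "\<dots> \<le> k powr \<beta> * ((s - s') * c * LL)" by (rule mult_left_mono[OF kb kpb])
        finally have klB: "k * lB \<le> k powr \<beta> * ((s - s') * c * LL)" .
        have "2 powr \<beta> \<le> k powr \<beta>" using k2 \<beta> by (intro powr_mono2) auto
        hence "\<gamma> * (s' * c * LL) \<le> k powr \<beta> * (s' * c * LL)"
          using s_pos c_pos LL0 unfolding \<gamma>_def by (intro mult_right_mono) auto
        hence "- s * (k powr \<beta> * (c * LL)) + k * lB \<le> - g * LL"
          using klB unfolding g_def by (simp add: algebra_simps)
        thus ?thesis by simp
      qed
      finally show ?thesis .
    qed
    have large: "prob (E i j) \<le> exp (- 3 * LL)" if ij: "i < j" "RR < sqrt (real (j - i))" for i j
    proof -
      define k where "k = real (j - i)"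
      define r where "r = sqrt k"
      have kpos: "k > 0" using ij by (simp add: k_def)
      have rpos: "r > 0" using kpos by (simp add: r_def)
      have rk: "r\<^sup>2 = k" using kpos by (simp add: r_def)
      have Rr: "6 * LL < t0 * V * r"
        using ij(2) t0 Vpos by (simp add: RR_def r_def k_def divide_less_eq mult.commute mult.left_commute)
      have gen: "prob (E i j) \<le> exp (- t * (r * V) + k * (C * t\<^sup>2))" if t: "0 \<le> t" "t \<le> t0" for t
      proof -
        have "prob (E i j) \<le> exp (- t * (r * V)) * exp (C * t\<^sup>2) ^ (j - i)"
          using win_large[OF ij(1) t] by (simp add: E_def r_def k_def)
        also have "\<dots> = exp (- t * (r * V)) * exp (k * (C * t\<^sup>2))"
          by (simp add: exp_of_nat_mult[symmetric] k_def)
        also have "\<dots> = exp (- t * (r * V) + k * (C * t\<^sup>2))" by (rule exp_add[symmetric])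
        finally show ?thesis .
      qed
      show ?thesis
      proof (cases "V / (2 * C * r) \<le> t0")
        case True
        define t where "t = V / (2 * C * r)"
        have t: "0 \<le> t" "t \<le> t0" using True Vpos Cpos rpos by (auto simp: t_def)
        have "- t * (r * V) + k * (C * t\<^sup>2) = - V\<^sup>2 / (4 * C)"
          using Cpos rpos by (simp add: t_def rk[symmetric] field_simps power2_eq_square)
        also have "\<dots> \<le> - 3 * LL" using V2 Cpos by (simp add: field_simps)
        finally show ?thesis using gen[OF t] by (meson exp_le_cancel_iff order.trans)
      next
        case False
        hence lt: "2 * C * t0 * r < V" using Cpos rpos by (simp add: field_simps)
        have "k * (C * t0\<^sup>2) = (t0 * r) * (C * t0 * r)" by (simp add: rk[symmetric] power2_eq_square)
        also have "\<dots> \<le> (t0 * r) * (V / 2)" using lt t0 rpos by (intro mult_left_mono) auto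
        finally have "- t0 * (r * V) + k * (C * t0\<^sup>2) \<le> - (t0 * V * r) / 2" by (simp add: algebra_simps)
        also have "\<dots> \<le> - 3 * LL" using Rr by simp
        finally show ?thesis using gen[of t0] t0 by (meson exp_le_cancel_iff order.trans less_imp_le order_refl)
      qed
    qed
    define P where "P = Sigma {..<n} (\<lambda>i. {i+2..n})"
    define w where "w k = (if sqrt (real k) \<le> RR then exp (- g * LL) else exp (- 3 * LL))" for k :: nat
    have w0: "0 \<le> w k" for k by (simp add: w_def)
    have Eb: "prob (E i j) \<le> w (j - i)" if "(i, j) \<in> P" for i j
      using that small[of i j] large[of i j] by (auto simp: P_def w_def not_le)
    have fP: "finite P" by (simp add: P_def)
    have "prob (\<Union>ij\<in>P. E (fst ij) (snd ij)) \<le> (\<Sum>ij\<in>P. prob (E (fst ij) (snd ij)))"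
      by (rule finite_measure_subadditive_finite[OF fP]) auto
    also have "\<dots> \<le> (\<Sum>ij\<in>P. w (snd ij - fst ij))"
      by (intro sum_mono) (use Eb in auto)
    also have "\<dots> = (\<Sum>i<n. \<Sum>j\<in>{i+2..n}. w (j - i))" by (simp add: P_def sum.Sigma split_beta)
    also have "\<dots> \<le> (\<Sum>i<n. \<Sum>k\<in>{2..n}. w k)"
    proof (rule sum_mono)
      fix i assume "i \<in> {..<n}"
      have inj: "inj_on (\<lambda>j. j - i) {i+2..n}" by (auto simp: inj_on_def)
      have "(\<Sum>j\<in>{i+2..n}. w (j - i)) = (\<Sum>k\<in>(\<lambda>j. j - i) ` {i+2..n}. w k)"
        using sum.reindex[OF inj, of w] by (simp add: o_def)
      also have "\<dots> \<le> (\<Sum>k\<in>{2..n}. w k)" by (intro sum_mono2) (auto simp: w0)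
      finally show "(\<Sum>j\<in>{i+2..n}. w (j - i)) \<le> (\<Sum>k\<in>{2..n}. w k)" .
    qed
    also have "\<dots> = n * (\<Sum>k\<in>{2..n}. w k)" by simp
    also have "\<dots> \<le> n * (RR\<^sup>2 * exp (- g * LL) + n * exp (- 3 * LL))"
    proof (rule mult_left_mono)
      have "(\<Sum>k\<in>{2..n}. w k) \<le> (\<Sum>k\<in>{2..n}. (if real k \<le> RR\<^sup>2 then exp (- g * LL) else 0) + exp (- 3 * LL))"
      proof (rule sum_mono)
        fix k assume "k \<in> {2..n}"
        show "w k \<le> (if real k \<le> RR\<^sup>2 then exp (- g * LL) else 0) + exp (- 3 * LL)"
        proof (cases "sqrt (real k) \<le> RR")
          case True
          hence "(sqrt (real k))\<^sup>2 \<le> RR\<^sup>2" by (intro power_mono) auto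
          hence "real k \<le> RR\<^sup>2" by simp
          thus ?thesis using True by (simp add: w_def)
        next
          case False thus ?thesis by (simp add: w_def)
        qed
      qed
      also have "\<dots> = card {k\<in>{2..n}. real k \<le> RR\<^sup>2} * exp (- g * LL) + card {2..n} * exp (- 3 * LL)"
        by (simp add: sum.distrib sum.inter_filter[symmetric])
      also have "\<dots> \<le> RR\<^sup>2 * exp (- g * LL) + n * exp (- 3 * LL)"
      proof (intro add_mono mult_right_mono)
        have "{k\<in>{2..n}. real k \<le> RR\<^sup>2} \<subseteq> {1..nat \<lfloor>RR\<^sup>2\<rfloor>}" by (auto simp: le_nat_floor)
        hence "card {k\<in>{2..n}. real k \<le> RR\<^sup>2} \<le> nat \<lfloor>RR\<^sup>2\<rfloor>" using card_mono[of "{1..nat \<lfloor>RR\<^sup>2\<rfloor>}"] by fastforce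
        hence "real (card {k\<in>{2..n}. real k \<le> RR\<^sup>2}) \<le> real (nat \<lfloor>RR\<^sup>2\<rfloor>)" by linarith
        also have "\<dots> \<le> RR\<^sup>2" by (simp add: of_nat_floor)
        finally show "real (card {k\<in>{2..n}. real k \<le> RR\<^sup>2}) \<le> RR\<^sup>2" .
        show "real (card {2..n}) \<le> real n" by simp
      qed auto
      finally show "(\<Sum>k\<in>{2..n}. w k) \<le> RR\<^sup>2 * exp (- g * LL) + n * exp (- 3 * LL)" .
    qed simp
    also have "\<dots> \<le> (36 / t0\<^sup>2) * (LL\<^sup>2 * real n powr (1 - g)) + 1 / real n"
    proof -
      have n0: "real n > 0" using hn(1) by simp
      have e1: "exp (- g * LL) = real n powr (- g)" using n0 by (simp add: powr_def LL_def)
      have "exp (- 3 * LL) = real n powr (- 3)" using n0 by (simp add: powr_def LL_def)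
      also have "\<dots> = 1 / real n ^ 3" using n0 by (simp add: powr_minus_divide)
      finally have e2: "exp (- 3 * LL) = 1 / real n ^ 3" .
      have "RR\<^sup>2 \<le> (6 * LL / t0)\<^sup>2" using RR0 RRle by (intro power_mono) auto
      hence "n * (RR\<^sup>2 * exp (- g * LL)) \<le> n * ((6 * LL / t0)\<^sup>2 * exp (- g * LL))"
        by (intro mult_left_mono mult_right_mono) auto
      also have "\<dots> = (36 / t0\<^sup>2) * (LL\<^sup>2 * real n powr (1 - g))"
        unfolding e1 using n0 by (simp add: powr_diff powr_minus_divide field_simps power2_eq_square)
      finally have A: "n * (RR\<^sup>2 * exp (- g * LL)) \<le> (36 / t0\<^sup>2) * (LL\<^sup>2 * real n powr (1 - g))" .
      have B: "real n * (real n * exp (- 3 * LL)) = 1 / real n" unfolding e2 using n0 by (simp add: field_simps power3_eq_cube)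
      show ?thesis using A B by (simp add: distrib_left)
    qed
    finally have badb: "prob (\<Union>ij\<in>P. E (fst ij) (snd ij)) \<le> (36 / t0\<^sup>2) * (LL\<^sup>2 * real n powr (1 - g)) + 1 / real n" .
    have n1: "1 \<le> n" using hn(1) by simp
    have Ubound: "prob {\<omega>\<in>space M. Umax X n \<omega> \<le> V} \<le> exp (- (real n * real n powr (- (D2 * c))))"
    proof -
      have seteq: "{\<omega>\<in>space M. Umax X n \<omega> \<le> V} = (\<Inter>k\<in>{1..n}. X k -` {..V} \<inter> space M)"
      proof -
        have "Umax X n \<omega> \<le> V \<longleftrightarrow> (\<forall>k\<in>{1..n}. X k \<omega> \<le> V)" for \<omega>
          unfolding Umax_def Umax_image using n1 by (subst Max_le_iff) auto
        thus ?thesis using n1 by auto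
      qed
      have pV1: "p V \<le> 1" unfolding p_def by simp
      have "prob {\<omega>\<in>space M. Umax X n \<omega> \<le> V} = (\<Prod>k\<in>{1..n}. prob (X k -` {..V} \<inter> space M))"
        unfolding seteq by (rule indep_varsD[OF assms(3)]) (use n1 in auto)
      also have "\<dots> = (\<Prod>k\<in>{1..n}. 1 - p V)"
      proof (rule prod.cong[OF refl])
        fix k assume k: "k \<in> {1..n}"
        have k1: "k \<ge> 1" using k by simp
        have "prob (X k -` {..V} \<inter> space M) = measure (distr M borel (X k)) {..V}"
          by (rule measure_distr[symmetric]) (use k1 in auto)
        also have "\<dots> = measure (distr M borel (X 1)) {..V}" using assms(4)[OF k1] by simp
        also have "\<dots> = prob (X 1 -` {..V} \<inter> space M)" by (rule measure_distr) auto
        also have "X 1 -` {..V} \<inter> space M = space M - {\<omega>\<in>space M. X 1 \<omega> > V}" by auto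
        also have "prob (space M - {\<omega>\<in>space M. X 1 \<omega> > V}) = 1 - p V"
          unfolding p_def by (rule prob_compl) measurable
        finally show "prob (X k -` {..V} \<inter> space M) = 1 - p V" .
      qed
      also have "\<dots> = (1 - p V) ^ n" by simp
      also have "\<dots> \<le> exp (- p V) ^ n"
        using pV1 exp_ge_add_one_self[of "- p V"] by (intro power_mono) auto
      also have "\<dots> = exp (- (real n * p V))" by (simp add: exp_of_nat_mult[symmetric])
      also have "\<dots> \<le> exp (- (real n * exp (- D2 * V powr \<alpha>)))"
        using p_lo[OF V1(2)] by (simp add: mult_left_mono)
      also have "exp (- D2 * V powr \<alpha>) = real n powr (- (D2 * c))"
        unfolding Va using n1 by (simp add: powr_def LL_def algebra_simps)
      finally show ?thesis .
    qed
    define S where "S = {\<omega>\<in>space M. Mmax X n \<omega> = Umax X n \<omega>}"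
    have Sm: "S \<in> sets M" unfolding S_def by measurable
    have UEm: "(\<Union>ij\<in>P. E (fst ij) (snd ij)) \<in> sets M" by (intro sets.finite_UN fP) auto
    have Um2: "{\<omega>\<in>space M. Umax X n \<omega> \<le> V} \<in> sets M" by measurable
    have incl: "space M - S \<subseteq> {\<omega>\<in>space M. Umax X n \<omega> \<le> V} \<union> (\<Union>ij\<in>P. E (fst ij) (snd ij))"
    proof
      fix \<omega> assume \<omega>: "\<omega> \<in> space M - S"
      show "\<omega> \<in> {\<omega>\<in>space M. Umax X n \<omega> \<le> V} \<union> (\<Union>ij\<in>P. E (fst ij) (snd ij))"
      proof (rule ccontr)
        assume nin: "\<omega> \<notin> {\<omega>\<in>space M. Umax X n \<omega> \<le> V} \<union> (\<Union>ij\<in>P. E (fst ij) (snd ij))"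
        have vU: "V < Umax X n \<omega>" using nin \<omega> by auto
        have nb: "psum X j \<omega> - psum X i \<omega> \<le> sqrt (real (j - i)) * V"
          if "i < j" "j \<le> n" "2 \<le> j - i" for i j
        proof -
          have "(i, j) \<in> P" using that by (auto simp: P_def)
          hence "\<omega> \<notin> E i j" using nin by force
          thus ?thesis using \<omega> by (auto simp: E_def not_less)
        qed
        have "Mmax X n \<omega> = Umax X n \<omega>" by (rule Mmax_eq_Umax[OF n1 vU nb])
        thus False using \<omega> by (simp add: S_def)
      qed
    qed
    have "prob (space M - S) \<le> prob ({\<omega>\<in>space M. Umax X n \<omega> \<le> V} \<union> (\<Union>ij\<in>P. E (fst ij) (snd ij)))"
      by (rule finite_measure_mono[OF incl]) (use UEm Um2 in auto)
    also have "\<dots> \<le> prob {\<omega>\<in>space M. Umax X n \<omega> \<le> V} + prob (\<Union>ij\<in>P. E (fst ij) (snd ij))"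
      by (rule measure_subadditive[OF Um2 UEm]) (auto simp: emeasure_eq_measure)
    also have "\<dots> \<le> b n" unfolding b_def using Ubound badb by (simp add: LL_def)
    finally have "prob (space M - S) \<le> b n" .
    moreover have "prob (space M - S) = 1 - prob S" by (rule prob_compl[OF Sm])
    ultimately show ?thesis by (simp add: S_def)
  qed
  have ev: "eventually (\<lambda>n. 1 - b n \<le> prob {\<omega>\<in>space M. Mmax X n \<omega> = Umax X n \<omega>}) sequentially"
  proof -
    have E1: "eventually (\<lambda>n::nat. (c * ln (real n)) powr (1/\<alpha>) \<ge> max x0 1) sequentially"
      by (rule asy1) (use c_pos a1 in auto)
    have E2: "eventually (\<lambda>n::nat. ((c * ln (real n)) powr (1/\<alpha>)) powr 2 \<ge> (12 * C) * ln (real n)) sequentially"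
      by (rule asy2) (use c_pos a1 a2 Cpos in auto)
    have E3: "eventually (\<lambda>n::nat. (6 * ln (real n) / t0) powr \<alpha> * (lB + 1) \<le> ((s - s') * c * c) * (ln (real n))\<^sup>2) sequentially"
      by (rule asy3) (use c_pos a2 t0 lB0 s_pos in auto)
    have E0: "eventually (\<lambda>n::nat. 3 \<le> n) sequentially" by (rule eventually_ge_at_top)
    show ?thesis using eventually_conj[OF E0 eventually_conj[OF E1 eventually_conj[OF E2 E3]]]
      by eventually_elim (rule main, auto)
  qed
  have blim: "b \<longlonglongrightarrow> 0"
  proof -
    have l1: "(\<lambda>n::nat. exp (- (real n * real n powr (- (D2 * c))))) \<longlonglongrightarrow> 0" by (rule asy4[OF D2c])
    have l2: "(\<lambda>n::nat. (36 / t0\<^sup>2) * ((ln (real n))\<^sup>2 * real n powr (1 - g)) + 1 / real n) \<longlonglongrightarrow> 0"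
      by (rule asy5[OF g1])
    show ?thesis unfolding b_def using tendsto_add[OF l1 l2] by simp
  qed
  have low: "(\<lambda>n. 1 - b n) \<longlonglongrightarrow> 1" using tendsto_diff[OF tendsto_const blim, of 1] by simp
  show ?thesis
    by (rule tendsto_sandwich[OF ev _ low tendsto_const]) (simp add: prob_le_1)
qed

end
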